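(* Let $\Omega\subset\mathbb{R}^n$ be open, $\omega\in A_\infty$, and $\varphi(x,t)=t^{p(x)}$ where $p:\Omega\to[1,\infty]$ is measurable with $\frac1p\in\mathcal P^{\log}(\Omega)$. Then $\varphi$ satisfies (A1)$_\omega$.
   Context: Convention: $t^\infty:=\infty\cdot\chi_{(1,\infty)}(t)$ and $1/\infty:=0$. A weight is a nonnegative locally integrable function $\omega$ on $\mathbb{R}^n$, $\omega(E):=\int_E\omega\,dx$. For $1<q<\infty$, $\omega\in A_q$ means $\sup_B|B|^{-q}\omega(B)\big(\int_B\omega^{-q'/q}dx\big)^{q-1}<\infty$ with $1/q+1/q'=1$, supremum over open balls; $\omega\in A_1$ means $M\omega\le C\omega$ a.e. ($M$ the Hardy–Littlewood maximal operator); $A_\infty:=\bigcup_{q\in[1,\infty)}A_q$. $\frac1p\in\mathcal P^{\log}(\Omega)$ means: there is $c_1>0$ with $\big|\frac1{p(x)}-\frac1{p(y)}\big|\le\frac{c_1}{\log(e+1/|x-y|)}$ for all $x,y\in\Omega$; and there exist $p_\infty\in[1,\infty]$ and $c_2>0$ with $\big|\frac1{p(x)}-\frac1{p_\infty}\big|\le\frac{c_2}{\log(e+|x|)}$ for all $x\in\Omega$. (A1)$_\omega$: there is $\beta_1\in(0,1]$ such that $\varphi(x,\beta_1t)\le\varphi(y,t)$ for every open ball $B$ with $\omega(B)\le1$, a.e. $x,y\in B\cap\Omega$, and every $t\ge0$ with $\varphi(y,t)\in[1,1/\omega(B)]$. *)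

theory Defs
  imports "HOL-Analysis.Analysis"
begin

definition weight :: "('a::euclidean_space \<Rightarrow> real) \<Rightarrow> bool" where
  "weight w \<longleftrightarrow> (\<forall>x. 0 \<le> w x) \<and>
     (\<forall>K. compact K \<longrightarrow> set_integrable lebesgue K w) \<and>
     \<not> (AE x in lebesgue. w x = 0)"

definition wmeas :: "('a::euclidean_space \<Rightarrow> real) \<Rightarrow> 'a set \<Rightarrow> ennreal" where
  "wmeas w E = (\<integral>\<^sup>+ x \<in> E. ennreal (w x) \<partial>lebesgue)"

definition maximal_fn :: "('a::euclidean_space \<Rightarrow> real) \<Rightarrow> 'a \<Rightarrow> ennreal" where
  "maximal_fn f x = (SUP (c, r) \<in> {(c, r). 0 < r \<and> x \<in> ball c r}.
      (\<integral>\<^sup>+ y \<in> ball c r. ennreal \<bar>f y\<bar> \<partial>lebesgue) / emeasure lebesgue (ball c r))"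

definition ennpow :: "ennreal \<Rightarrow> real \<Rightarrow> ennreal" where
  "ennpow a s = (if a = \<infinity> then \<infinity> else ennreal (enn2real a powr s))"

definition negpow :: "real \<Rightarrow> real \<Rightarrow> ennreal" where
  "negpow a s = (if a = 0 then \<infinity> else ennreal (a powr (- s)))"

definition A_q :: "real \<Rightarrow> ('a::euclidean_space \<Rightarrow> real) \<Rightarrow> bool" where
  "A_q q w \<longleftrightarrow> weight w \<and> (\<exists>C::real. \<forall>c r. 0 < r \<longrightarrow>
      ennreal (measure lebesgue (ball c r) powr (- q)) * wmeas w (ball c r)
        * ennpow (\<integral>\<^sup>+ x \<in> ball c r. negpow (w x) ((q / (q - 1)) / q) \<partial>lebesgue) (q - 1)
      \<le> ennreal C)"

definition A_1 :: "('a::euclidean_space \<Rightarrow> real) \<Rightarrow> bool" where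
  "A_1 w \<longleftrightarrow> weight w \<and> (\<exists>C::real. AE x in lebesgue. maximal_fn w x \<le> ennreal C * ennreal (w x))"

definition A_infty :: "('a::euclidean_space \<Rightarrow> real) \<Rightarrow> bool" where
  "A_infty w \<longleftrightarrow> A_1 w \<or> (\<exists>q>1. A_q q w)"

definition ereal_recip :: "ereal \<Rightarrow> real" where
  "ereal_recip a = (if a = \<infinity> then 0 else 1 / real_of_ereal a)"

definition recip_Plog :: "'a::euclidean_space set \<Rightarrow> ('a \<Rightarrow> ereal) \<Rightarrow> bool" where
  "recip_Plog \<Omega> p \<longleftrightarrow>
     (\<exists>c1>0. \<forall>x\<in>\<Omega>. \<forall>y\<in>\<Omega>.
        \<bar>ereal_recip (p x) - ereal_recip (p y)\<bar> \<le> c1 / ln (exp 1 + 1 / norm (x - y))) \<and>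
     (\<exists>p_inf c2. 1 \<le> p_inf \<and> 0 < c2 \<and> (\<forall>x\<in>\<Omega>.
        \<bar>ereal_recip (p x) - ereal_recip p_inf\<bar> \<le> c2 / ln (exp 1 + norm x)))"

definition var_exp_phi :: "('a \<Rightarrow> ereal) \<Rightarrow> 'a \<Rightarrow> real \<Rightarrow> ennreal" where
  "var_exp_phi p x t = (if p x = \<infinity> then (if 1 < t then \<infinity> else 0)
                        else ennreal (t powr real_of_ereal (p x)))"

definition A1_w :: "('a::euclidean_space \<Rightarrow> real) \<Rightarrow> 'a set \<Rightarrow> ('a \<Rightarrow> real \<Rightarrow> ennreal) \<Rightarrow> bool" where
  "A1_w w \<Omega> \<phi> \<longleftrightarrow> (\<exists>\<beta>1. 0 < \<beta>1 \<and> \<beta>1 \<le> 1 \<and>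
     (\<forall>c r. 0 < r \<longrightarrow> wmeas w (ball c r) \<le> 1 \<longrightarrow>
        (AE x in lebesgue. AE y in lebesgue. x \<in> ball c r \<inter> \<Omega> \<longrightarrow> y \<in> ball c r \<inter> \<Omega> \<longrightarrow>
           (\<forall>t\<ge>0. 1 \<le> \<phi> y t \<and> \<phi> y t \<le> 1 / wmeas w (ball c r) \<longrightarrow> \<phi> x (\<beta>1 * t) \<le> \<phi> y t))))"

end

theory Submission
  imports Defs
begin


lemma key_dlog:
  fixes x y c :: "'a::euclidean_space"
  assumes R0: "R0 \<ge> 1" and r: "r > 0" and c1: "c1 > 0" and c2: "c2 > 0"
    and cx: "dist c x < r" and cy: "dist c y < r"
    and D0: "0 \<le> D" and D1: "D \<le> 1"
    and Dxy: "x \<noteq> y \<Longrightarrow> D \<le> c1 / ln (exp 1 + 1 / norm (x - y))"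
    and Deq: "x = y \<Longrightarrow> D = 0"
    and Dinf: "D \<le> c2 / ln (exp 1 + norm x) + c2 / ln (exp 1 + norm y)"
  shows "D * ln ((r + norm c + R0) / r) \<le> ln 3 + ln 4 + c1 + 2 * c2 * (ln (2 * R0) + 1)"
proof -
  define M1 where "M1 = ln 3 + ln 4 + c1 + 2 * c2 * (ln (2 * R0) + 1)"
  have lnR0: "ln (2 * R0) \<ge> 0" using R0 by simp
  have ln34: "ln 3 \<ge> (0::real)" "ln 4 \<ge> (0::real)" by auto
  have rho_pos: "(r + norm c + R0) / r > 0" using r R0 by (smt (verit) divide_pos_pos norm_ge_zero)
  show ?thesis
  proof (cases "2 * r \<ge> norm c + R0")
    case True
    have "(r + norm c + R0) / r \<le> 3" using True r by (simp add: field_simps)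
    hence "ln ((r + norm c + R0) / r) \<le> ln 3" using rho_pos
      by (subst ln_le_cancel_iff) auto
    moreover have "ln ((r + norm c + R0) / r) \<ge> 0" using r R0 by (simp add: field_simps)
    ultimately have "D * ln ((r + norm c + R0) / r) \<le> 1 * ln 3"
      using D0 D1 by (intro mult_mono) auto
    moreover have "0 \<le> 2 * c2 * (ln (2 * R0) + 1)" using c2 lnR0 by simp
    ultimately show ?thesis using c1 ln34 by linarith
  next
    case False
    hence small: "2 * r < norm c + R0" by simp
    have pos: "norm c + R0 > 0" using R0 by (smt (verit) norm_ge_zero)
    have "(r + norm c + R0) / r \<le> (2 * (norm c + R0)) / r" using small r
      by (intro divide_right_mono) auto
    also have "\<dots> = (norm c + R0) * (2 / r)" by simp
    finally have "(r + norm c + R0) / r \<le> (norm c + R0) * (2 / r)" .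
    hence "ln ((r + norm c + R0) / r) \<le> ln ((norm c + R0) * (2 / r))" using r pos rho_pos
      by (subst ln_le_cancel_iff) auto
    also have "\<dots> = ln (norm c + R0) + ln (2 / r)" using pos r by (intro ln_mult_pos) auto
    finally have split: "ln ((r + norm c + R0) / r) \<le> ln (norm c + R0) + ln (2 / r)" .
    have part1: "D * ln (2 / r) \<le> ln 4 + c1"
    proof (cases "x = y")
      case True thus ?thesis using Deq c1 ln34 by simp
    next
      case ne: False
      show ?thesis
      proof (cases "2 / r \<le> 1")
        case True
        hence "ln (2 / r) \<le> 0" using r by simp
        hence "D * ln (2 / r) \<le> 0" using D0 by (simp add: mult_nonneg_nonpos)
        thus ?thesis using c1 ln34 by linarith
      next
        case False
        have "dist x y \<le> dist x c + dist c y" by (rule dist_triangle)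
        hence nxy: "norm (x - y) < 2 * r" using cx cy by (simp add: dist_commute dist_norm)
        have nxy0: "norm (x - y) > 0" using ne by simp
        define L where "L = ln (exp 1 + 1 / norm (x - y))"
        have "1 / (2 * r) < 1 / norm (x - y)" using nxy nxy0 by (simp add: frac_less2)
        hence "1 / (2 * r) < exp 1 + 1 / norm (x - y)" by (smt (verit) exp_gt_zero)
        hence lt: "ln (1 / (2 * r)) < L" unfolding L_def using r
          by (subst ln_less_cancel_iff) (auto intro!: add_pos_nonneg)
        have "1 < exp (1::real)" by simp
        moreover have "0 \<le> 1 / norm (x - y)" by simp
        ultimately have "1 < exp 1 + 1 / norm (x - y)" by linarith
        hence Lpos: "L > 0" unfolding L_def by (intro ln_gt_zero)
        have "ln (2 / r) = ln (4 * (1 / (2 * r)))" by simp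
        also have "\<dots> = ln 4 + ln (1 / (2 * r))" using r by (intro ln_mult_pos) auto
        finally have "ln (2 / r) = ln 4 + ln (1 / (2 * r))" .
        also have "\<dots> \<le> ln 4 + L" using lt by simp
        finally have a: "ln (2 / r) \<le> ln 4 + L" .
        have "D * ln (2 / r) \<le> D * (ln 4 + L)" using a D0 by (simp add: mult_left_mono)
        also have "\<dots> = D * ln 4 + D * L" by (simp add: algebra_simps)
        also have "D * ln 4 \<le> ln 4" using D1 ln34 by (simp add: mult_left_le_one_le D0)
        also have "D * L \<le> c1" using Dxy[OF ne] Lpos unfolding L_def[symmetric]
          by (simp add: pos_le_divide_eq)
        finally show ?thesis by simp
      qed
    qed
    have bnd: "c2 / ln (exp 1 + norm z) * ln (norm c + R0) \<le> c2 * (ln (2 * R0) + 1)"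
      if zc: "dist c z < r" for z :: 'a
    proof -
      define lz where "lz = ln (exp 1 + norm z)"
      have "exp 1 \<le> exp 1 + norm z" by simp
      hence "ln (exp 1) \<le> ln (exp 1 + norm z)" by (subst ln_le_cancel_iff) (auto intro!: add_pos_nonneg)
      hence lz1: "lz \<ge> 1" unfolding lz_def by simp
      have "norm c \<le> norm z + norm (c - z)" by (rule norm_triangle_sub)
      hence "norm c \<le> norm z + r" using zc by (simp add: dist_norm)
      hence a1: "norm c + R0 \<le> 2 * norm z + 2 * R0" using small by linarith
      have a2: "2 * norm z \<le> 2 * R0 * norm z" using R0 by (intro mult_right_mono) auto
      have e1: "exp 1 \<ge> (1::real)" by simp
      have a3: "2 * R0 \<le> 2 * R0 * exp 1" using R0 e1 by (simp add: mult_le_cancel_left1)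
      have a4: "2 * R0 * (exp 1 + norm z) = 2 * R0 * exp 1 + 2 * R0 * norm z" by (simp add: algebra_simps)
      have "norm c + R0 \<le> 2 * R0 * (exp 1 + norm z)" using a1 a2 a3 a4 by linarith
      hence "ln (norm c + R0) \<le> ln (2 * R0 * (exp 1 + norm z))" using pos
        by (subst ln_le_cancel_iff) auto
      also have "\<dots> = ln (2 * R0) + lz" unfolding lz_def using R0
        by (intro ln_mult_pos) (auto intro: add_pos_nonneg)
      finally have l: "ln (norm c + R0) \<le> ln (2 * R0) + lz" .
      have "c2 / lz * ln (norm c + R0) \<le> c2 / lz * (ln (2 * R0) + lz)"
        using l c2 lz1 by (intro mult_left_mono) auto
      also have "\<dots> = c2 * (ln (2 * R0) / lz + 1)" using lz1 by (simp add: field_simps)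
      also have "ln (2 * R0) / lz \<le> ln (2 * R0) / 1" using lz1 lnR0
        by (intro divide_left_mono) auto
      finally show ?thesis using c2 by (simp add: lz_def mult_left_mono)
    qed
    have "1 \<le> norm c + R0" using R0 norm_ge_zero[of c] by linarith
    hence lc: "ln (norm c + R0) \<ge> 0" by (intro ln_ge_zero)
    have part2: "D * ln (norm c + R0) \<le> 2 * c2 * (ln (2 * R0) + 1)"
    proof -
      have "D * ln (norm c + R0) \<le> (c2 / ln (exp 1 + norm x) + c2 / ln (exp 1 + norm y)) * ln (norm c + R0)"
        using Dinf lc by (simp add: mult_right_mono)
      also have "\<dots> = c2 / ln (exp 1 + norm x) * ln (norm c + R0) + c2 / ln (exp 1 + norm y) * ln (norm c + R0)"
        by (simp add: algebra_simps)
      also have "\<dots> \<le> c2 * (ln (2 * R0) + 1) + c2 * (ln (2 * R0) + 1)"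
        using bnd[OF cx] bnd[OF cy] by simp
      finally show ?thesis by simp
    qed
    have "D * ln ((r + norm c + R0) / r) \<le> D * (ln (norm c + R0) + ln (2 / r))"
      using split D0 by (simp add: mult_left_mono)
    also have "\<dots> = D * ln (norm c + R0) + D * ln (2 / r)" by (simp add: algebra_simps)
    finally show ?thesis using part1 part2 ln34 by linarith
  qed
qed



lemma weight_nonneg: "weight w \<Longrightarrow> 0 \<le> w x"
  unfolding weight_def by auto

lemma weight_cmeas:
  assumes "weight w"
  shows "(\<lambda>x. indicator (cball c R) x * w x) \<in> borel_measurable lebesgue"
proof -
  have "set_integrable lebesgue (cball c R) w" using assms unfolding weight_def by auto
  hence "integrable lebesgue (\<lambda>x. indicator (cball c R) x *\<^sub>R w x)"
    unfolding set_integrable_def .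
  thus ?thesis by (simp add: borel_measurable_integrable)
qed

lemma wmeas_ball:
  "wmeas w (ball c r) = (\<integral>\<^sup>+x. ennreal (indicator (cball c r) x * w x) * indicator (ball c r) x \<partial>lebesgue)"
  unfolding wmeas_def by (intro nn_integral_cong) (auto simp: indicator_def)

lemma wmeas_ball_integrand_meas:
  assumes "weight w"
  shows "(\<lambda>x. ennreal (indicator (cball c r) x * w x) * indicator (ball c r) x) \<in> borel_measurable lebesgue"
proof -
  note [measurable] = weight_cmeas[OF assms, of c r]
  have [measurable]: "ball c r \<in> sets lebesgue" by simp
  show ?thesis by measurable
qed

lemma wmeas_fin:
  assumes "weight w"
  shows "wmeas w (ball c r) < \<infinity>"
proof -
  have "integrable lebesgue (\<lambda>x. indicator (cball c r) x *\<^sub>R w x)"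
    using assms unfolding weight_def set_integrable_def by auto
  hence "(\<integral>\<^sup>+x. ennreal (norm (indicator (cball c r) x *\<^sub>R w x)) \<partial>lebesgue) < \<infinity>"
    by (simp add: integrable_iff_bounded)
  moreover have "wmeas w (ball c r) \<le> (\<integral>\<^sup>+x. ennreal (norm (indicator (cball c r) x *\<^sub>R w x)) \<partial>lebesgue)"
    unfolding wmeas_ball
    by (intro nn_integral_mono) (auto simp: indicator_def weight_nonneg[OF assms])
  ultimately show ?thesis by (rule le_less_trans[rotated])
qed

lemma wmeas_mono: "A \<subseteq> B \<Longrightarrow> wmeas w A \<le> wmeas w B"
  unfolding wmeas_def by (intro nn_integral_mono) (auto simp: indicator_def)

definition WW :: "('a::euclidean_space \<Rightarrow> real) \<Rightarrow> 'a \<Rightarrow> real \<Rightarrow> real" where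
  "WW w c r = enn2real (wmeas w (ball c r))"

lemma wmeas_WW: "weight w \<Longrightarrow> wmeas w (ball c r) = ennreal (WW w c r)"
  unfolding WW_def using wmeas_fin[of w c r] by (simp add: ennreal_enn2real_if)

lemma WW_nonneg: "WW w c r \<ge> 0"
  unfolding WW_def by simp

lemma WW_mono: "weight w \<Longrightarrow> ball c r \<subseteq> ball c' r' \<Longrightarrow> WW w c r \<le> WW w c' r'"
  using wmeas_mono[of "ball c r" "ball c' r'" w] wmeas_WW[of w c r] wmeas_WW[of w c' r']
  by (simp add: WW_nonneg)

lemma ball_emeas:
  fixes c :: "'a::euclidean_space"
  assumes "0 \<le> r"
  shows "emeasure lebesgue (ball c r) = ennreal (unit_ball_vol DIM('a) * r ^ DIM('a))"
  using emeasure_ball[OF assms, of c] by (simp add: emeasure_completion)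

lemma ball_meas:
  fixes c :: "'a::euclidean_space"
  assumes "0 \<le> r"
  shows "measure lebesgue (ball c r) = unit_ball_vol DIM('a) * r ^ DIM('a)"
  unfolding measure_def using ball_emeas[OF assms, of c] assms by simp

lemma set_nn_integral_meas:
  "(\<lambda>x. ennreal (indicator (cball c r) x * w x) * indicator (ball c r) x) = (\<lambda>x. ennreal (w x) * indicator (ball c r) x)"
  by (auto simp: indicator_def)



lemma A1_doubling:
  fixes w :: "'a::euclidean_space \<Rightarrow> real"
  assumes "A_1 w"
  shows "\<exists>C>0. \<forall>c r R. 0 < r \<longrightarrow> r \<le> R \<longrightarrow> WW w c R \<le> C * (R / r) ^ DIM('a) * WW w c r"
proof -
  have wt: "weight w" using assms unfolding A_1_def by auto
  obtain C0 where C0: "AE x in lebesgue. maximal_fn w x \<le> ennreal C0 * ennreal (w x)"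
    using assms unfolding A_1_def by auto
  define C where "C = max C0 1"
  have Cpos: "C > 0" unfolding C_def by simp
  have absw: "\<And>y. \<bar>w y\<bar> = w y" using weight_nonneg[OF wt] by simp
  define V where "V = unit_ball_vol DIM('a)"
  have Vpos: "V > 0" unfolding V_def by simp
  have "WW w c R \<le> C * (R / r) ^ DIM('a) * WW w c r" if r: "0 < r" "r \<le> R" for c r R
  proof -
    define mR where "mR = V * R ^ DIM('a)"
    define mr where "mr = V * r ^ DIM('a)"
    have mRpos: "mR > 0" unfolding mR_def using Vpos r by simp
    have mrpos: "mr > 0" unfolding mr_def using Vpos r by simp
    have eR: "emeasure lebesgue (ball c R) = ennreal mR" unfolding mR_def V_def
      using r by (intro ball_emeas) auto
    have er: "emeasure lebesgue (ball c r) = ennreal mr" unfolding mr_def V_def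
      using r by (intro ball_emeas) auto
    define W' where "W' = WW w c R"
    define W where "W = WW w c r"
    have W'nn: "W' \<ge> 0" "W \<ge> 0" unfolding W'_def W_def by (auto simp: WW_nonneg)
    have pt: "ennreal (W' / mR) \<le> maximal_fn w x" if x: "x \<in> ball c r" for x
    proof -
      have xR: "x \<in> ball c R" using x r by auto
      have "(\<integral>\<^sup>+ y \<in> ball c R. ennreal \<bar>w y\<bar> \<partial>lebesgue) / emeasure lebesgue (ball c R)
            \<le> maximal_fn w x"
        unfolding maximal_fn_def
        by (rule SUP_upper2[where i="(c, R)"]) (use xR r in auto)
      moreover have "(\<integral>\<^sup>+ y \<in> ball c R. ennreal \<bar>w y\<bar> \<partial>lebesgue) = ennreal W'"
        unfolding W'_def using wmeas_WW[OF wt, of c R] unfolding wmeas_def absw by simp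
      ultimately show ?thesis using eR W'nn mRpos by (simp add: divide_ennreal)
    qed
    have AEi: "AE x in lebesgue. ennreal (W' / mR) * indicator (ball c r) x
        \<le> ennreal C * (ennreal (indicator (cball c r) x * w x) * indicator (ball c r) x)"
      using C0
    proof eventually_elim
      case (elim x)
      show ?case
      proof (cases "x \<in> ball c r")
        case True
        have "ennreal (W' / mR) \<le> ennreal C0 * ennreal (w x)" using pt[OF True] elim by simp
        also have "\<dots> \<le> ennreal C * ennreal (w x)" unfolding C_def
          by (intro mult_right_mono) auto
        finally show ?thesis using True by (auto simp: indicator_def)
      qed auto
    qed
    have "(\<integral>\<^sup>+x. ennreal (W' / mR) * indicator (ball c r) x \<partial>lebesgue)
        \<le> (\<integral>\<^sup>+x. ennreal C * (ennreal (indicator (cball c r) x * w x) * indicator (ball c r) x) \<partial>lebesgue)"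
      by (rule nn_integral_mono_AE[OF AEi])
    also have "\<dots> = ennreal C * wmeas w (ball c r)"
      unfolding wmeas_ball by (intro nn_integral_cmult wmeas_ball_integrand_meas wt)
    also have "\<dots> = ennreal (C * W)" unfolding W_def wmeas_WW[OF wt] using Cpos WW_nonneg
      by (subst ennreal_mult) auto
    finally have X: "ennreal (W' / mR) * ennreal mr \<le> ennreal (C * W)"
      using er by (simp add: nn_integral_cmult_indicator)
    have "ennreal (W' / mR * mr) = ennreal (W' / mR) * ennreal mr"
      using W'nn mRpos mrpos by (subst ennreal_mult) auto
    with X have "ennreal (W' / mR * mr) \<le> ennreal (C * W)" by simp
    hence ineq: "W' / mR * mr \<le> C * W" using Cpos W'nn
      by (subst (asm) ennreal_le_iff) auto
    have ratio: "mR / mr = (R / r) ^ DIM('a)" unfolding mR_def mr_def using Vpos r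
      by (simp add: power_divide)
    have "W' = (W' / mR * mr) * (mR / mr)" using mRpos mrpos by simp
    also have "\<dots> \<le> (C * W) * (mR / mr)" using ineq mRpos mrpos
      by (intro mult_right_mono) auto
    finally show ?thesis unfolding W'_def W_def ratio by (simp add: algebra_simps)
  qed
  thus ?thesis using Cpos by blast
qed



lemma negpow_meas[measurable]: "(\<lambda>a. negpow a e) \<in> borel_measurable borel"
  unfolding negpow_def by measurable

lemma young_pt:
  fixes z e :: real
  assumes "z > 0" "e > 0"
  shows "1 \<le> z + z powr (- e)"
proof (cases "z \<ge> 1")
  case True thus ?thesis by (smt (verit) powr_ge_zero)
next
  case False
  have "1 \<le> (1 / z) powr e" using False assms by (intro ge_one_powr_ge_zero) auto
  also have "(1 / z) powr e = z powr (- e)" by (simp add: powr_divide powr_minus_divide)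
  finally show ?thesis using assms by simp
qed

lemma pt_Aq:
  fixes a u q :: real
  assumes a: "a \<ge> 0" and u: "u > 0" and q: "q > 1"
  shows "ennreal 1 \<le> ennreal (u * a) + ennreal (u powr (- 1 / (q - 1))) * negpow a ((q / (q - 1)) / q)"
proof -
  define e where "e = 1 / (q - 1)"
  have epos: "e > 0" unfolding e_def using q by simp
  have ee: "(q / (q - 1)) / q = e" unfolding e_def using q by (simp add: field_simps)
  have ee2: "- 1 / (q - 1) = - e" unfolding e_def by simp
  show ?thesis
  proof (cases "a = 0")
    case True
    have "u powr (- e) > 0" using u by simp
    thus ?thesis unfolding ee ee2 negpow_def using True by (simp add: ennreal_mult_top)
  next
    case False
    hence apos: "a > 0" using a by simp
    have "u powr (- e) * a powr (- e) = (u * a) powr (- e)" by (simp add: powr_mult)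
    have "1 \<le> u * a + (u * a) powr (- e)" using u apos epos by (intro young_pt) auto
    hence "ennreal 1 \<le> ennreal (u * a + (u * a) powr (- e))" by (rule ennreal_leI)
    also have "\<dots> = ennreal (u * a) + ennreal ((u * a) powr (- e))"
      using u apos by (intro ennreal_plus) auto
    also have "ennreal ((u * a) powr (- e)) = ennreal (u powr (- e)) * negpow a e"
      unfolding negpow_def using False by (simp add: powr_mult ennreal_mult)
    finally show ?thesis unfolding ee ee2 .
  qed
qed

lemma Aq_doubling:
  fixes w :: "'a::euclidean_space \<Rightarrow> real"
  assumes Aqw: "A_q q w" and q: "q > 1"
  shows "\<exists>C>0. \<forall>c r R. 0 < r \<longrightarrow> r \<le> R \<longrightarrow> WW w c R \<le> C * (R / r) powr (real DIM('a) * q) * WW w c r"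
proof -
  have wt: "weight w" using Aqw unfolding A_q_def by auto
  obtain C0 where Aq: "\<And>c r. 0 < r \<Longrightarrow>
      ennreal (measure lebesgue (ball c r) powr (- q)) * wmeas w (ball c r)
        * ennpow (\<integral>\<^sup>+ x \<in> ball c r. negpow (w x) ((q / (q - 1)) / q) \<partial>lebesgue) (q - 1)
      \<le> ennreal C0"
    using Aqw unfolding A_q_def by blast
  define Ct where "Ct = max C0 1"
  have Ctpos: "Ct > 0" unfolding Ct_def by simp
  define e where "e = (q / (q - 1)) / q"
  define V where "V = unit_ball_vol DIM('a)"
  have Vpos: "V > 0" unfolding V_def by simp
  have "WW w c R \<le> (2 powr q * Ct) * (R / r) powr (real DIM('a) * q) * WW w c r"
    if r: "0 < r" "r \<le> R" for c r R
  proof -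
    define mR where "mR = V * R ^ DIM('a)"
    define mr where "mr = V * r ^ DIM('a)"
    have mRpos: "mR > 0" unfolding mR_def using Vpos r by simp
    have mrpos: "mr > 0" unfolding mr_def using Vpos r by simp
    have er: "emeasure lebesgue (ball c r) = ennreal mr" unfolding mr_def V_def
      using r by (intro ball_emeas) auto
    have mmR: "measure lebesgue (ball c R) = mR" unfolding mR_def V_def
      using r by (intro ball_meas) auto
    define W' where "W' = WW w c R"
    define W where "W = WW w c r"
    have W'nn: "W' \<ge> 0" "W \<ge> 0" unfolding W'_def W_def by (auto simp: WW_nonneg)
    define \<theta> where "\<theta> = (mr / mR) powr q * W' / (2 powr q * Ct)"
    have main: "\<theta> \<le> W"
    proof (cases "W' = 0")
      case True thus ?thesis unfolding \<theta>_def using W'nn by simp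
    next
      case False
      hence W'pos: "W' > 0" using W'nn by simp
      define I' where "I' = (\<integral>\<^sup>+ x \<in> ball c R. negpow (w x) e \<partial>lebesgue)"
      have A: "ennreal (mR powr (- q)) * ennreal W' * ennpow I' (q - 1) \<le> ennreal C0"
        using Aq[of R c] r unfolding mmR I'_def e_def W'_def wmeas_WW[OF wt] by simp
      have I'fin: "I' \<noteq> \<infinity>"
      proof
        assume "I' = \<infinity>"
        hence "ennreal (mR powr (- q)) * ennreal W' * ennpow I' (q - 1) = \<infinity>"
          unfolding ennpow_def using mRpos W'pos by (simp add: ennreal_mult_top)
        thus False using A by (simp add: top_unique)
      qed
      then obtain J where J: "I' = ennreal J" "J \<ge> 0" by (cases I' rule: ennreal_cases) auto
      have "ennreal (mR powr (- q) * W' * J powr (q - 1)) \<le> ennreal C0"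
        using A J W'pos unfolding ennpow_def by (simp add: ennreal_mult)
      also have "\<dots> \<le> ennreal Ct" unfolding Ct_def by (intro ennreal_leI) simp
      finally have Areal: "mR powr (- q) * W' * J powr (q - 1) \<le> Ct"
        using Ctpos by (subst (asm) ennreal_le_iff) auto
      show ?thesis
      proof (rule ccontr)
        assume "\<not> \<theta> \<le> W"
        hence Wlt: "W < \<theta>" by simp
        have \<theta>pos: "\<theta> > 0" using W'nn Wlt by simp
        define u where "u = mr / (2 * \<theta>)"
        have upos: "u > 0" unfolding u_def using mrpos \<theta>pos by simp
        define k where "k = u powr (- 1 / (q - 1))"
        have kpos: "k > 0" unfolding k_def using upos by simp
        define g where "g = (\<lambda>x. ennreal (indicator (cball c r) x * w x) * indicator (ball c r) x)"
        define h where "h = (\<lambda>x. negpow (indicator (cball c R) x * w x) e * indicator (ball c R) x)"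
        have gm: "g \<in> borel_measurable lebesgue" unfolding g_def by (rule wmeas_ball_integrand_meas[OF wt])
        have hm: "h \<in> borel_measurable lebesgue" unfolding h_def
        proof -
          note [measurable] = weight_cmeas[OF wt, of c R]
          have [measurable]: "ball c R \<in> sets lebesgue" by simp
          show "(\<lambda>x. negpow (indicator (cball c R) x * w x) e * indicator (ball c R) x) \<in> borel_measurable lebesgue"
            by measurable
        qed
        have Ih: "I' = integral\<^sup>N lebesgue h" unfolding I'_def h_def
          by (intro nn_integral_cong) (auto simp: indicator_def)
        have Ig: "wmeas w (ball c r) = integral\<^sup>N lebesgue g" unfolding g_def by (rule wmeas_ball)
        have "ennreal mr = (\<integral>\<^sup>+x. indicator (ball c r) x \<partial>lebesgue)"
          using er by (subst nn_integral_indicator) auto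
        also have "\<dots> \<le> (\<integral>\<^sup>+x. ennreal u * g x + ennreal k * h x \<partial>lebesgue)"
        proof (intro nn_integral_mono)
          fix x
          show "indicator (ball c r) x \<le> ennreal u * g x + ennreal k * h x"
          proof (cases "x \<in> ball c r")
            case True
            hence xR: "x \<in> ball c R" using r by auto
            have "ennreal 1 \<le> ennreal (u * w x) + ennreal k * negpow (w x) e"
              unfolding k_def e_def using upos q weight_nonneg[OF wt, of x] by (intro pt_Aq) auto
            thus ?thesis unfolding g_def h_def using True xR upos weight_nonneg[OF wt, of x]
              by (simp add: indicator_def ennreal_mult)
          qed auto
        qed
        also have "\<dots> = ennreal u * wmeas w (ball c r) + ennreal k * I'"
          unfolding Ig Ih using gm hm by (simp add: nn_integral_add nn_integral_cmult)
        also have "\<dots> = ennreal (u * W + k * J)"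
          unfolding W_def wmeas_WW[OF wt] J(1) using upos kpos J(2) WW_nonneg[of w c r]
          by (simp add: ennreal_mult ennreal_plus)
        finally have "mr \<le> u * W + k * J"
          using upos kpos J(2) W'nn by (subst (asm) ennreal_le_iff) auto
        moreover have "u * W < u * \<theta>" using Wlt upos by simp
        moreover have "u * \<theta> = mr / 2" unfolding u_def using \<theta>pos by simp
        ultimately have kJ: "mr / 2 < k * J" by linarith
        hence "(mr / 2) powr (q - 1) < (k * J) powr (q - 1)"
          using q mrpos by (intro powr_less_mono2) auto
        also have "(k * J) powr (q - 1) = J powr (q - 1) / u"
        proof -
          have "k powr (q - 1) = u powr (- 1 / (q - 1) * (q - 1))" unfolding k_def by (simp add: powr_powr)
          also have "\<dots> = 1 / u" using q upos by (simp add: powr_neg_one)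
          finally show ?thesis by (simp add: powr_mult)
        qed
        finally have B: "u * (mr / 2) powr (q - 1) < J powr (q - 1)" using upos
          by (simp add: field_simps)
        have C: "u * (mr / 2) powr (q - 1) = Ct * mR powr q / W'"
        proof -
          have "(mr / 2) powr (q - 1) = (mr powr q / 2 powr q) / (mr / 2)"
            using mrpos by (simp add: powr_diff powr_divide)
          hence "u * (mr / 2) powr (q - 1) = mr / (2 * \<theta>) * ((mr powr q / 2 powr q) / (mr / 2))"
            unfolding u_def by simp
          also have "\<dots> = mr powr q / (\<theta> * 2 powr q)" using mrpos \<theta>pos by (simp add: field_simps)
          also have "\<dots> = Ct * mR powr q / W'" unfolding \<theta>_def
            using mrpos mRpos W'pos Ctpos by (simp add: powr_divide field_simps)
          finally show ?thesis .
        qed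
        have "Ct < mR powr (- q) * W' * J powr (q - 1)"
        proof -
          have "Ct * mR powr q / W' < J powr (q - 1)" using B C by simp
          hence "Ct * mR powr q < J powr (q - 1) * W'" using W'pos by (simp add: divide_less_eq)
          hence "Ct < J powr (q - 1) * W' / mR powr q" using mRpos by (simp add: less_divide_eq)
          thus ?thesis by (simp add: powr_minus_divide field_simps)
        qed
        thus False using Areal by simp
      qed
    qed
    have ratio: "(mr / mR) powr q * (R / r) powr (real DIM('a) * q) = 1"
    proof -
      have "mr / mR = (r / R) ^ DIM('a)" unfolding mR_def mr_def using Vpos r
        by (simp add: power_divide)
      also have "\<dots> = (r / R) powr real DIM('a)" using r by (simp add: powr_realpow)
      finally have "(mr / mR) powr q = (r / R) powr (real DIM('a) * q)" by (simp add: powr_powr)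
      hence "(mr / mR) powr q * (R / r) powr (real DIM('a) * q) = (r / R) powr (real DIM('a) * q) * (R / r) powr (real DIM('a) * q)"
        by simp
      also have "\<dots> = ((r / R) * (R / r)) powr (real DIM('a) * q)" by (rule powr_mult[symmetric])
      also have "(r / R) * (R / r) = 1" using r by simp
      finally show ?thesis by simp
    qed
    have "W' = \<theta> * (2 powr q * Ct) * (R / r) powr (real DIM('a) * q)"
      unfolding \<theta>_def using ratio Ctpos by (simp add: field_simps)
    also have "\<dots> \<le> W * (2 powr q * Ct) * (R / r) powr (real DIM('a) * q)"
      using main Ctpos by (intro mult_right_mono) auto
    finally show ?thesis unfolding W'_def W_def by (simp add: algebra_simps)
  qed
  moreover have "2 powr q * Ct > 0" using Ctpos by simp
  ultimately show ?thesis by blast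
qed



lemma weight_pos_ball:
  fixes w :: "'a::euclidean_space \<Rightarrow> real"
  assumes wt: "weight w"
  shows "\<exists>R0\<ge>1. WW w 0 R0 > 0"
proof (rule ccontr)
  assume neg: "\<not> (\<exists>R0\<ge>1. WW w 0 R0 > 0)"
  have Z: "WW w 0 R0 = 0" if "R0 \<ge> 1" for R0
  proof -
    have "\<not> WW w 0 R0 > 0" using neg that by blast
    thus ?thesis using WW_nonneg[of w 0 R0] by linarith
  qed
  have fam: "AE x in lebesgue. x \<in> ball 0 (real (Suc n)) \<longrightarrow> w x = 0" for n
  proof -
    define g where "g = (\<lambda>x. ennreal (indicator (cball (0::'a) (real (Suc n))) x * w x) * indicator (ball 0 (real (Suc n))) x)"
    have gm: "g \<in> borel_measurable lebesgue" unfolding g_def by (rule wmeas_ball_integrand_meas[OF wt])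
    have "integral\<^sup>N lebesgue g = 0" unfolding g_def wmeas_ball[symmetric] wmeas_WW[OF wt]
      using Z[of "real (Suc n)"] by simp
    hence "AE x in lebesgue. g x = 0" using gm by (simp add: nn_integral_0_iff_AE)
    thus ?thesis
    proof eventually_elim
      case (elim x)
      thus ?case unfolding g_def using weight_nonneg[OF wt, of x] by (auto simp: indicator_def)
    qed
  qed
  have "AE x in lebesgue. \<forall>n. x \<in> ball 0 (real (Suc n)) \<longrightarrow> w x = 0"
    unfolding AE_all_countable using fam by blast
  hence "AE x in lebesgue. w x = 0"
  proof eventually_elim
    case (elim x)
    have "x \<in> ball 0 (real (Suc (nat \<lceil>norm x\<rceil>)))"
      by simp (linarith)
    thus ?case using elim by blast
  qed
  thus False using wt unfolding weight_def by blast
qed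

lemma Ainf_doubling:
  fixes w :: "'a::euclidean_space \<Rightarrow> real"
  assumes "A_infty w"
  shows "\<exists>C>0. \<exists>s>0. \<forall>c r R. 0 < r \<longrightarrow> r \<le> R \<longrightarrow> WW w c R \<le> C * (R / r) powr s * WW w c r"
proof (cases "A_1 w")
  case True
  then obtain C where C: "C > 0" "\<forall>c r R. 0 < r \<longrightarrow> r \<le> R \<longrightarrow> WW w c R \<le> C * (R / r) ^ DIM('a) * WW w c r"
    using A1_doubling by blast
  have "\<forall>c r R. 0 < r \<longrightarrow> r \<le> R \<longrightarrow> WW w c R \<le> C * (R / r) powr real DIM('a) * WW w c r"
    using C(2) by (auto simp: powr_realpow)
  moreover have "real DIM('a) > 0" by simp
  ultimately show ?thesis using C(1) by blast
next
  case False
  then obtain q where q: "q > 1" "A_q q w" using assms unfolding A_infty_def by blast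
  then obtain C where C: "C > 0" "\<forall>c r R. 0 < r \<longrightarrow> r \<le> R \<longrightarrow> WW w c R \<le> C * (R / r) powr (real DIM('a) * q) * WW w c r"
    using Aq_doubling by blast
  moreover have "real DIM('a) * q > 0" using q by simp
  ultimately show ?thesis by blast
qed

lemma lower_bound:
  fixes w :: "'a::euclidean_space \<Rightarrow> real"
  assumes "A_infty w"
  shows "\<exists>\<kappa>>0. \<exists>s>0. \<exists>R0\<ge>1. \<forall>c r. 0 < r \<longrightarrow> \<kappa> * (r / (r + norm c + R0)) powr s \<le> WW w c r"
proof -
  have wt: "weight w" using assms unfolding A_infty_def A_1_def A_q_def by auto
  obtain C s where C: "C > 0" "s > 0" "\<And>c r R. 0 < r \<Longrightarrow> r \<le> R \<Longrightarrow> WW w c R \<le> C * (R / r) powr s * WW w c r"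
    using Ainf_doubling[OF assms] by blast
  obtain R0 where R0: "R0 \<ge> 1" "WW w 0 R0 > 0" using weight_pos_ball[OF wt] by blast
  define \<kappa> where "\<kappa> = WW w 0 R0 / C"
  have "\<kappa> * (r / (r + norm c + R0)) powr s \<le> WW w c r" if r: "0 < r" for c r
  proof -
    define R where "R = r + norm c + R0"
    have nc: "norm c \<ge> 0" by simp
    have rR: "r \<le> R" "R > 0" unfolding R_def using R0(1) r nc by linarith+
    have "ball 0 R0 \<subseteq> ball c R"
    proof
      fix y assume "y \<in> ball (0::'a) R0"
      hence "norm y < R0" by simp
      moreover have "dist c y \<le> norm c + norm y" by (simp add: dist_norm norm_triangle_ineq4)
      ultimately show "y \<in> ball c R" unfolding R_def using r by simp
    qed
    hence "WW w 0 R0 \<le> WW w c R" by (rule WW_mono[OF wt])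
    also have "\<dots> \<le> C * (R / r) powr s * WW w c r" using C(3) r rR by blast
    finally have X: "WW w 0 R0 \<le> C * (R / r) powr s * WW w c r" .
    have pp: "(r / R) powr s * (R / r) powr s = 1"
    proof -
      have "(r / R) powr s * (R / r) powr s = ((r / R) * (R / r)) powr s" by (rule powr_mult[symmetric])
      also have "(r / R) * (R / r) = 1" using r rR by simp
      finally show ?thesis by simp
    qed
    have "\<kappa> * (r / R) powr s = WW w 0 R0 * (r / R) powr s / C" unfolding \<kappa>_def by simp
    also have "\<dots> \<le> C * (R / r) powr s * WW w c r * (r / R) powr s / C"
      using X C(1) by (intro divide_right_mono mult_right_mono) auto
    also have "\<dots> = WW w c r" using C(1) pp by (simp add: field_simps)
    finally show ?thesis unfolding R_def .
  qed
  moreover have "\<kappa> > 0" unfolding \<kappa>_def using R0 C by simp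
  ultimately show ?thesis using C(2) R0(1) by blast
qed

lemma recip_range:
  assumes "1 \<le> p"
  shows "0 \<le> ereal_recip p" "ereal_recip p \<le> 1"
  using assms by (cases p rule: ereal_cases; auto simp: ereal_recip_def)+

lemma final_pt:
  fixes p :: "'a \<Rightarrow> ereal"
  assumes px: "1 \<le> p x" and py: "1 \<le> p y" and W: "0 < W" "W \<le> 1" and M: "M \<ge> 0"
    and D: "\<bar>ereal_recip (p x) - ereal_recip (p y)\<bar> * ln (1 / W) \<le> M"
    and t: "t \<ge> 0" and lo: "1 \<le> var_exp_phi p y t" and hi: "var_exp_phi p y t \<le> 1 / ennreal W"
  shows "var_exp_phi p x (exp (- M) * t) \<le> var_exp_phi p y t"
proof -
  have hiW: "1 / ennreal W = ennreal (1 / W)" using W by (simp add: divide_ennreal[symmetric])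
  have lnW: "ln (1 / W) \<ge> 0" using W by simp
  have pyfin: "p y \<noteq> \<infinity>"
  proof
    assume "p y = \<infinity>"
    hence "var_exp_phi p y t = \<infinity>" using lo unfolding var_exp_phi_def by (auto split: if_splits)
    thus False using hi hiW by (simp add: top_unique)
  qed
  then obtain P where P: "p y = ereal P" "P \<ge> 1" using py by (cases "p y" rule: ereal_cases) auto
  define S where "S = t powr P"
  have phy: "var_exp_phi p y t = ennreal S" unfolding var_exp_phi_def S_def using P by simp
  have S0: "S \<ge> 0" unfolding S_def by simp
  have S1: "1 \<le> S" using ennreal_le_iff[OF S0, of 1] lo phy by simp
  have "ennreal S \<le> ennreal (1 / W)" using hi phy hiW by simp
  hence SW: "S \<le> 1 / W" using W by (subst (asm) ennreal_le_iff) auto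
  have tpos: "t > 0" using S1 t unfolding S_def by (cases "t = 0") auto
  have lnS: "ln S = P * ln t" unfolding S_def using tpos by (simp add: ln_powr)
  define b where "b = 1 / P"
  have brec: "ereal_recip (p y) = b" unfolding b_def ereal_recip_def using P by simp
  have tS: "t = exp (b * ln S)" unfolding lnS b_def using P tpos by simp
  have lnS0: "ln S \<ge> 0" using S1 by simp
  have lnSW: "ln S \<le> ln (1 / W)" using S1 SW W by (subst ln_le_cancel_iff) auto
  have b0: "b \<ge> 0" unfolding b_def using P by simp
  show ?thesis
  proof (cases "p x = \<infinity>")
    case True
    have arec: "ereal_recip (p x) = 0" using True unfolding ereal_recip_def by simp
    have "b * ln S \<le> b * ln (1 / W)" using lnSW b0 by (intro mult_left_mono)
    also have "\<dots> \<le> M" using D unfolding arec brec using b0 by simp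
    finally have "exp (- M) * t \<le> 1" unfolding tS by (simp add: exp_add[symmetric])
    thus ?thesis unfolding var_exp_phi_def using True by simp
  next
    case False
    then obtain Q where Q: "p x = ereal Q" "Q \<ge> 1" using px by (cases "p x" rule: ereal_cases) auto
    define a where "a = 1 / Q"
    have arec: "ereal_recip (p x) = a" unfolding a_def ereal_recip_def using Q by simp
    have key: "(a - b) * ln S \<ge> - M"
    proof (cases "a \<ge> b")
      case True
      hence "(a - b) * ln S \<ge> 0" using lnS0 by simp
      thus ?thesis using M by simp
    next
      case False
      have "(a - b) * ln (1 / W) \<le> (a - b) * ln S" using False lnSW
        by (intro mult_left_mono_neg) auto
      moreover have "(a - b) * ln (1 / W) = - (\<bar>a - b\<bar> * ln (1 / W))"
      proof -
        have ab: "\<bar>a - b\<bar> = b - a" using False by simp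
        show ?thesis unfolding ab by (simp add: algebra_simps)
      qed
      ultimately show ?thesis using D unfolding arec brec by simp
    qed
    have bt: "exp (- M) * t \<le> exp (a * ln S)" unfolding tS
    proof -
      have "exp (- M) * exp (b * ln S) = exp (- M + b * ln S)" by (rule exp_add[symmetric])
      also have "\<dots> \<le> exp (a * ln S)" using key by (simp add: algebra_simps)
      finally show "exp (- M) * exp (b * ln S) \<le> exp (a * ln S)" .
    qed
    have "(exp (- M) * t) powr Q \<le> (exp (a * ln S)) powr Q"
      using bt Q t by (intro powr_mono2) auto
    also have "\<dots> = exp (Q * a * ln S)" by (simp add: powr_def exp_ln_iff)
    also have "Q * a = 1" unfolding a_def using Q by simp
    also have "exp (1 * ln S) = S" using S1 by simp
    finally have "(exp (- M) * t) powr Q \<le> S" .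
    moreover have "var_exp_phi p x (exp (- M) * t) = ennreal ((exp (- M) * t) powr Q)"
      unfolding var_exp_phi_def using Q by simp
    ultimately show ?thesis unfolding phy by (simp add: ennreal_leI)
  qed
qed



theorem lemma5p5:
  fixes \<Omega> :: "'a::euclidean_space set" and w :: "'a \<Rightarrow> real" and p :: "'a \<Rightarrow> ereal"
  assumes "open \<Omega>"
    and "A_infty w"
    and "p \<in> borel_measurable (lebesgue_on \<Omega>)"
    and "\<forall>x\<in>\<Omega>. 1 \<le> p x"
    and "recip_Plog \<Omega> p"
  shows "A1_w w \<Omega> (var_exp_phi p)"
proof -
  have wt: "weight w" using assms(2) unfolding A_infty_def A_1_def A_q_def by auto
  obtain \<kappa> s R0 where kp: "\<kappa> > 0" and sp: "s > 0" and R0: "R0 \<ge> 1"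
    and LB: "\<And>c r. 0 < r \<Longrightarrow> \<kappa> * (r / (r + norm c + R0)) powr s \<le> WW w c r"
    using lower_bound[OF assms(2)] by blast
  obtain c1 where c1: "c1 > 0" and H1: "\<And>x y. x \<in> \<Omega> \<Longrightarrow> y \<in> \<Omega> \<Longrightarrow>
      \<bar>ereal_recip (p x) - ereal_recip (p y)\<bar> \<le> c1 / ln (exp 1 + 1 / norm (x - y))"
    using assms(5) unfolding recip_Plog_def by blast
  obtain pinf c2 where c2: "c2 > 0" and H2: "\<And>x. x \<in> \<Omega> \<Longrightarrow>
      \<bar>ereal_recip (p x) - ereal_recip pinf\<bar> \<le> c2 / ln (exp 1 + norm x)"
    using assms(5) unfolding recip_Plog_def by blast
  define A where "A = max 0 (ln (1 / \<kappa>))"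
  define M1 where "M1 = ln 3 + ln 4 + c1 + 2 * c2 * (ln (2 * R0) + 1)"
  define M where "M = A + s * M1"
  have A0: "A \<ge> 0" unfolding A_def by simp
  have "ln (2 * R0) \<ge> 0" using R0 by simp
  hence "2 * c2 * (ln (2 * R0) + 1) \<ge> 0" using c2 by simp
  moreover have "ln 3 \<ge> (0::real)" "ln 4 \<ge> (0::real)" by auto
  ultimately have M10: "M1 \<ge> 0" unfolding M1_def using c1 by linarith
  have M0: "M \<ge> 0" unfolding M_def using A0 M10 sp by simp
  have pt: "var_exp_phi p x (exp (- M) * t) \<le> var_exp_phi p y t"
    if r: "0 < r" and wm: "wmeas w (ball c r) \<le> 1"
      and x: "x \<in> ball c r \<inter> \<Omega>" and y: "y \<in> ball c r \<inter> \<Omega>" and t: "t \<ge> 0"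
      and ph: "1 \<le> var_exp_phi p y t" "var_exp_phi p y t \<le> 1 / wmeas w (ball c r)"
    for c r x y t
  proof -
    define W where "W = WW w c r"
    have wmW: "wmeas w (ball c r) = ennreal W" unfolding W_def by (rule wmeas_WW[OF wt])
    have W1: "W \<le> 1" using wm unfolding wmW by simp
    have lbW: "\<kappa> * (r / (r + norm c + R0)) powr s \<le> W" unfolding W_def using LB r by blast
    have nc: "norm c \<ge> 0" by simp
    have basepos: "r / (r + norm c + R0) > 0" using r R0 nc by (intro divide_pos_pos) linarith+
    have lbpos: "\<kappa> * (r / (r + norm c + R0)) powr s > 0"
      using kp basepos by (intro mult_pos_pos) auto
    have Wpos: "W > 0" using lbW lbpos by linarith
    define a where "a = ereal_recip (p x)"
    define b where "b = ereal_recip (p y)"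
    define ai where "ai = ereal_recip pinf"
    define D where "D = \<bar>a - b\<bar>"
    have px: "1 \<le> p x" "1 \<le> p y" using assms(4) x y by auto
    have ab: "0 \<le> a" "a \<le> 1" "0 \<le> b" "b \<le> 1" unfolding a_def b_def using recip_range px by auto
    have Dxy: "D \<le> c1 / ln (exp 1 + 1 / norm (x - y))" unfolding D_def a_def b_def
      using H1 x y by blast
    have Dinf: "D \<le> c2 / ln (exp 1 + norm x) + c2 / ln (exp 1 + norm y)"
    proof -
      have "D \<le> \<bar>a - ai\<bar> + \<bar>b - ai\<bar>" unfolding D_def by linarith
      thus ?thesis using H2[of x] H2[of y] x y unfolding a_def b_def ai_def by simp
    qed
    have DM1: "D * ln ((r + norm c + R0) / r) \<le> M1" unfolding M1_def
    proof (rule key_dlog[OF R0 r c1 c2])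
      show "dist c x < r" "dist c y < r" using x y by auto
      show "0 \<le> D" "D \<le> 1" unfolding D_def using ab by auto
      show "x \<noteq> y \<Longrightarrow> D \<le> c1 / ln (exp 1 + 1 / norm (x - y))" using Dxy .
      show "x = y \<Longrightarrow> D = 0" unfolding D_def a_def b_def by simp
      show "D \<le> c2 / ln (exp 1 + norm x) + c2 / ln (exp 1 + norm y)" using Dinf .
    qed
    define \<rho> where "\<rho> = (r + norm c + R0) / r"
    have rhopos: "\<rho> > 0" unfolding \<rho>_def using r R0 nc by (intro divide_pos_pos) linarith+
    have inv: "r / (r + norm c + R0) = inverse \<rho>" unfolding \<rho>_def by simp
    have "ln (\<kappa> * (r / (r + norm c + R0)) powr s) \<le> ln W"
      using lbW lbpos Wpos by (subst ln_le_cancel_iff) auto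
    moreover have "ln (\<kappa> * (r / (r + norm c + R0)) powr s) = ln \<kappa> - s * ln \<rho>"
      using kp basepos unfolding inv using rhopos by (simp add: ln_mult_pos ln_powr ln_inverse)
    ultimately have lnW: "ln (1 / W) \<le> ln (1 / \<kappa>) + s * ln \<rho>"
      using Wpos kp by (simp add: ln_div)
    have "D * ln (1 / W) \<le> D * (A + s * ln \<rho>)"
      using lnW A_def D_def by (intro mult_left_mono) auto
    also have "\<dots> = D * A + s * (D * ln \<rho>)" by (simp add: algebra_simps)
    also have "D * A \<le> A" using ab A0 unfolding D_def by (intro mult_left_le_one_le) auto
    also have "s * (D * ln \<rho>) \<le> s * M1" using DM1 sp unfolding \<rho>_def by simp
    finally have DW: "D * ln (1 / W) \<le> M" unfolding M_def by simp
    show ?thesis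
    proof (rule final_pt[where p=p and x=x and y=y, OF px Wpos W1 M0])
      show "\<bar>ereal_recip (p x) - ereal_recip (p y)\<bar> * ln (1 / W) \<le> M"
        using DW unfolding D_def a_def b_def .
      show "0 \<le> t" using t .
      show "1 \<le> var_exp_phi p y t" using ph(1) .
      show "var_exp_phi p y t \<le> 1 / ennreal W" using ph(2) unfolding wmW .
    qed
  qed
  show ?thesis unfolding A1_w_def
  proof (intro exI[of _ "exp (- M)"] conjI allI impI)
    show "0 < exp (- M)" by simp
    show "exp (- M) \<le> 1" using M0 by simp
    fix c r assume r: "0 < r" and wm: "wmeas w (ball c r) \<le> 1"
    show "AE x in lebesgue. AE y in lebesgue. x \<in> ball c r \<inter> \<Omega> \<longrightarrow> y \<in> ball c r \<inter> \<Omega> \<longrightarrow>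
           (\<forall>t\<ge>0. 1 \<le> var_exp_phi p y t \<and> var_exp_phi p y t \<le> 1 / wmeas w (ball c r) \<longrightarrow>
              var_exp_phi p x (exp (- M) * t) \<le> var_exp_phi p y t)"
      using pt[OF r wm] by (intro AE_I2) blast
  qed
qed

end
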